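(* For every integer $n\ge8$, $\mathfrak{S}(G_n)<2^n$, where $G_n$ is the bipartite graph with parts $V_1=[n]$ and $V_2=[n]$ (two disjoint copies of $\{1,\dots,n\}$) and edge set $\{(a,b)\in V_1\times V_2:|a-b|=1\}$.
   Context: For a bipartite graph $G$ with parts $V_1,V_2$ whose vertices are labelled by integers (labels may be shared between the parts), $\mathfrak{S}(G)=\sum 2^{-|S_1\cup S_2|}$, the sum over all pairs $S_1\subseteq V_1$, $S_2\subseteq V_2$ with no edge of $G$ between $S_1$ and $S_2$; here $S_1\cup S_2$ is the union of the sets of labels (so a label appearing in both $S_1$ and $S_2$ is counted once). *)

theory Defs
  imports Complex_Main
begin

definition frakS :: "'a set \<Rightarrow> 'b set \<Rightarrow> ('a \<Rightarrow> 'b \<Rightarrow> bool) \<Rightarrow> ('a \<Rightarrow> int) \<Rightarrow> ('b \<Rightarrow> int) \<Rightarrow> real" where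
  "frakS V1 V2 E lab1 lab2 =
     (\<Sum>(S1, S2) \<in> {(S1, S2). S1 \<subseteq> V1 \<and> S2 \<subseteq> V2 \<and> (\<forall>a\<in>S1. \<forall>b\<in>S2. \<not> E a b)}.
        (1/2) ^ card (lab1 ` S1 \<union> lab2 ` S2))"

text \<open>G_n: both parts are copies of {1..n} (as separate arguments, hence disjoint), vertex
  labelled by itself, edges (a,b) with |a - b| = 1.\<close>

definition Gn_frakS :: "nat \<Rightarrow> real" where
  "Gn_frakS n = frakS {1..int n} {1..int n} (\<lambda>a b. \<bar>a - b\<bar> = 1) id id"

end

theory Submission
  imports Defs
begin

definition okp :: "int set \<Rightarrow> int set \<Rightarrow> bool" where
  "okp S1 S2 = (\<forall>a\<in>S1. \<forall>b\<in>S2. \<not> \<bar>a - b\<bar> = 1)"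

definition q :: "nat \<Rightarrow> bool \<Rightarrow> bool \<Rightarrow> int set \<Rightarrow> int set \<Rightarrow> real" where
  "q m x y S1 S2 = (if okp S1 S2 \<and> (int m \<in> S1 \<longleftrightarrow> x) \<and> (int m \<in> S2 \<longleftrightarrow> y)
     then (1/2::real) ^ card (S1 \<union> S2) else 0)"

definition QQ :: "nat \<Rightarrow> bool \<Rightarrow> bool \<Rightarrow> real" where
  "QQ m x y = (\<Sum>S1\<in>Pow {1..int m}. \<Sum>S2\<in>Pow {1..int m}. q m x y S1 S2)"

lemma sum_Pow_insert:
  assumes "a \<notin> A" "finite A"
  shows "(\<Sum>S\<in>Pow (insert a A). f S) = (\<Sum>S\<in>Pow A. f S) + (\<Sum>S\<in>Pow A. f (insert a S))"
proof -
  have inj: "inj_on (insert a) (Pow A)" using assms(1) by (auto simp: inj_on_def)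
  have d: "Pow A \<inter> insert a ` Pow A = {}" using assms(1) by auto
  have "(\<Sum>S\<in>Pow (insert a A). f S) = (\<Sum>S\<in>Pow A \<union> insert a ` Pow A. f S)"
    by (simp add: Pow_insert)
  also have "\<dots> = (\<Sum>S\<in>Pow A. f S) + (\<Sum>S\<in>insert a ` Pow A. f S)"
    using d assms(2) by (intro sum.union_disjoint) auto
  also have "(\<Sum>S\<in>insert a ` Pow A. f S) = (\<Sum>S\<in>Pow A. f (insert a S))"
    using inj by (simp add: sum.reindex)
  finally show ?thesis .
qed

lemma ivl_Suc: "{1..int (Suc m)} = insert (1 + int m) {1..int m}"
  by auto

lemma q1:
  assumes "S1 \<subseteq> {1..int m}" "S2 \<subseteq> {1..int m}"
  shows "q (Suc m) x y S1 S2 = (if \<not>x \<and> \<not>y then q m True True S1 S2 + q m True False S1 S2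
      + q m False True S1 S2 + q m False False S1 S2 else 0)"
proof -
  have "1 + int m \<notin> S1" "1 + int m \<notin> S2" using assms by auto
  then show ?thesis unfolding q_def by auto
qed

lemma okp_ins1:
  assumes "S2 \<subseteq> {1..int m}"
  shows "okp (insert (1 + int m) S1) S2 = (okp S1 S2 \<and> int m \<notin> S2)"
proof -
  have "(\<forall>b\<in>S2. \<not> \<bar>1 + int m - b\<bar> = 1) = (int m \<notin> S2)"
    using assms by force
  then show ?thesis unfolding okp_def by auto
qed

lemma okp_ins2:
  assumes "S1 \<subseteq> {1..int m}"
  shows "okp S1 (insert (1 + int m) S2) = (okp S1 S2 \<and> int m \<notin> S1)"
proof -
  have "(\<forall>b\<in>S1. \<not> \<bar>b - (1 + int m)\<bar> = 1) = (int m \<notin> S1)"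
    using assms by force
  then show ?thesis unfolding okp_def by auto
qed

lemma okp_ins12:
  assumes "S1 \<subseteq> {1..int m}" "S2 \<subseteq> {1..int m}"
  shows "okp (insert (1 + int m) S1) (insert (1 + int m) S2) = (okp S1 S2 \<and> int m \<notin> S1 \<and> int m \<notin> S2)"
  using okp_ins1[of "insert (1 + int m) S2" m S1] okp_ins2[OF assms(1), of S2] assms
  unfolding okp_def by auto

lemma card_ins:
  assumes "S1 \<subseteq> {1..int m}" "S2 \<subseteq> {1..int m}"
  shows "card (insert (1 + int m) (S1 \<union> S2)) = Suc (card (S1 \<union> S2))"
proof -
  have "finite (S1 \<union> S2)" using assms finite_subset by (metis finite_Un finite_atLeastAtMost_int)
  moreover have "1 + int m \<notin> S1 \<union> S2" using assms by auto
  ultimately show ?thesis by simp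
qed

lemma q2:
  assumes "S1 \<subseteq> {1..int m}" "S2 \<subseteq> {1..int m}"
  shows "q (Suc m) x y (insert (1 + int m) S1) S2 = (if x \<and> \<not>y then
      (q m True False S1 S2 + q m False False S1 S2) / 2 else 0)"
proof -
  have "1 + int m \<notin> S2" using assms by auto
  moreover have "insert (1 + int m) S1 \<union> S2 = insert (1 + int m) (S1 \<union> S2)" by auto
  ultimately show ?thesis unfolding q_def using okp_ins1[OF assms(2), of S1] card_ins[OF assms]
    by auto
qed

lemma q3:
  assumes "S1 \<subseteq> {1..int m}" "S2 \<subseteq> {1..int m}"
  shows "q (Suc m) x y S1 (insert (1 + int m) S2) = (if \<not>x \<and> y then
      (q m False True S1 S2 + q m False False S1 S2) / 2 else 0)"
proof -
  have "1 + int m \<notin> S1" using assms by auto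
  moreover have "S1 \<union> insert (1 + int m) S2 = insert (1 + int m) (S1 \<union> S2)" by auto
  ultimately show ?thesis unfolding q_def using okp_ins2[OF assms(1), of S2] card_ins[OF assms]
    by auto
qed

lemma q4:
  assumes "S1 \<subseteq> {1..int m}" "S2 \<subseteq> {1..int m}"
  shows "q (Suc m) x y (insert (1 + int m) S1) (insert (1 + int m) S2) = (if x \<and> y then
      q m False False S1 S2 / 2 else 0)"
proof -
  have "insert (1 + int m) S1 \<union> insert (1 + int m) S2 = insert (1 + int m) (S1 \<union> S2)" by auto
  then show ?thesis unfolding q_def using okp_ins12[OF assms] card_ins[OF assms]
    by auto
qed


lemma QQ_Suc:
  "QQ (Suc m) x y =
     (if \<not>x \<and> \<not>y then QQ m True True + QQ m True False + QQ m False True + QQ m False False else 0)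
   + (if x \<and> \<not>y then (QQ m True False + QQ m False False) / 2 else 0)
   + (if \<not>x \<and> y then (QQ m False True + QQ m False False) / 2 else 0)
   + (if x \<and> y then QQ m False False / 2 else 0)" (is "_ = ?R")
proof -
  let ?A = "{1..int m}"
  have nA: "1 + int m \<notin> ?A" by simp
  have fA: "finite ?A" by simp
  have iv: "{1..int (Suc m)} = insert (1 + int m) ?A" by auto
  have "QQ (Suc m) x y = (\<Sum>S1\<in>Pow ?A. \<Sum>S2\<in>Pow ?A.
      q (Suc m) x y S1 S2 + q (Suc m) x y S1 (insert (1 + int m) S2)
    + q (Suc m) x y (insert (1 + int m) S1) S2 + q (Suc m) x y (insert (1 + int m) S1) (insert (1 + int m) S2))"
    unfolding QQ_def iv sum_Pow_insert[OF nA fA] sum.distrib by (simp add: algebra_simps)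
  also have "\<dots> = (\<Sum>S1\<in>Pow ?A. \<Sum>S2\<in>Pow ?A.
      (if \<not>x \<and> \<not>y then q m True True S1 S2 + q m True False S1 S2
      + q m False True S1 S2 + q m False False S1 S2 else 0)
    + (if \<not>x \<and> y then (q m False True S1 S2 + q m False False S1 S2) / 2 else 0)
    + (if x \<and> \<not>y then (q m True False S1 S2 + q m False False S1 S2) / 2 else 0)
    + (if x \<and> y then q m False False S1 S2 / 2 else 0))"
    by (intro sum.cong refl) (simp add: q1 q2 q3 q4)
  also have "\<dots> = ?R"
    by (cases x; cases y; simp add: QQ_def sum.distrib add_divide_distrib sum_divide_distrib[symmetric])
  finally show ?thesis .
qed


fun st :: "nat \<Rightarrow> real \<times> real \<times> real \<times> real" where
  "st 0 = (1, 0, 0, 0)"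
| "st (Suc m) = (case st m of (z, a, b, c) \<Rightarrow> (z + a + b + c, (z + a) / 2, (z + b) / 2, z / 2))"

lemma QQ_st: "st m = (QQ m False False, QQ m True False, QQ m False True, QQ m True True)"
proof (induction m)
  case 0
  show ?case by (simp add: QQ_def q_def okp_def)
next
  case (Suc m)
  then show ?case by (simp add: QQ_Suc)
qed

lemma frakS_QQ: "Gn_frakS n = QQ n False False + QQ n True False + QQ n False True + QQ n True True"
proof -
  let ?A = "{1..int n}"
  let ?W = "\<lambda>S1 S2. (1/2::real) ^ card (S1 \<union> S2)"
  have set_eq: "{(S1, S2). S1 \<subseteq> ?A \<and> S2 \<subseteq> ?A \<and> (\<forall>a\<in>S1. \<forall>b\<in>S2. \<not> \<bar>a - b\<bar> = 1)}
      = {p \<in> Pow ?A \<times> Pow ?A. okp (fst p) (snd p)}"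
    by (auto simp: okp_def)
  have "Gn_frakS n = (\<Sum>p\<in>{p \<in> Pow ?A \<times> Pow ?A. okp (fst p) (snd p)}. ?W (fst p) (snd p))"
    unfolding Gn_frakS_def frakS_def set_eq by (intro sum.cong refl) auto
  also have "\<dots> = (\<Sum>p\<in>Pow ?A \<times> Pow ?A. if okp (fst p) (snd p) then ?W (fst p) (snd p) else 0)"
    by (intro sum.inter_filter) auto
  also have "\<dots> = (\<Sum>S1\<in>Pow ?A. \<Sum>S2\<in>Pow ?A. if okp S1 S2 then ?W S1 S2 else 0)"
    by (simp add: sum.cartesian_product split_def)
  also have "\<dots> = (\<Sum>S1\<in>Pow ?A. \<Sum>S2\<in>Pow ?A. q n False False S1 S2 + q n True False S1 S2
      + q n False True S1 S2 + q n True True S1 S2)"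
    by (intro sum.cong refl) (auto simp: q_def)
  also have "\<dots> = QQ n False False + QQ n True False + QQ n False True + QQ n True True"
    by (simp add: QQ_def sum.distrib)
  finally show ?thesis .
qed


definition Inv :: "real \<times> real \<times> real \<times> real \<Rightarrow> bool" where
  "Inv t = (case t of (z, a, b, c) \<Rightarrow> z > 0 \<and> 34/100 * z \<le> a \<and> a \<le> 35/100 * z
     \<and> 34/100 * z \<le> b \<and> b \<le> 35/100 * z \<and> 25/100 * z \<le> c \<and> c \<le> 26/100 * z)"

lemma Inv_step:
  assumes "Inv (st m)"
  shows "Inv (st (Suc m)) \<and> fst (st (Suc m)) \<le> 2 * fst (st m)"
proof -
  obtain z a b c where e: "st m = (z, a, b, c)" by (cases "st m") auto
  show ?thesis using assms unfolding e Inv_def by (simp add: e)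
qed

lemma st8: "st 8 = (8233/64, 11373/256, 11373/256, 2113/64)"
  by (simp add: numeral_eq_Suc)

lemma st9: "fst (st 9) = 32065/128"
  by (simp add: numeral_eq_Suc)

lemma main_bound:
  assumes "8 \<le> n"
  shows "Inv (st n) \<and> fst (st (Suc n)) \<le> 2 ^ (n - 8) * (32065/128)"
  using assms
proof (induction n rule: dec_induct)
  case base
  show ?case using st9 by (simp add: st8 Inv_def)
next
  case (step k)
  then have i: "Inv (st (Suc k))" and le: "fst (st (Suc (Suc k))) \<le> 2 * fst (st (Suc k))"
    using Inv_step Inv_step[of "Suc k"] by blast+
  obtain j where "k = 8 + j" using step.hyps le_Suc_ex by blast
  then have "2 ^ (Suc k - 8) = 2 * (2::real) ^ (k - 8)" by simp
  then show ?case using i le step.IH by simp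
qed

theorem mainTheorem14:
  fixes n :: nat
  assumes "n \<ge> 8"
  shows "Gn_frakS n < 2 ^ n"
proof -
  have g: "Gn_frakS n = fst (st (Suc n))"
    by (simp add: frakS_QQ QQ_st QQ_Suc)
  have "fst (st (Suc n)) \<le> 2 ^ (n - 8) * (32065/128)" using main_bound[OF assms] by blast
  also have "\<dots> < 2 ^ (n - 8) * 2 ^ 8" by simp
  also have "\<dots> = 2 ^ (n - 8 + 8)" by (simp only: power_add)
  also have "\<dots> = 2 ^ n" using assms by simp
  finally show ?thesis using g by simp
qed

end
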